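(* Let $L$ be multi-group scale invariant and twice differentiable on $U=\{x\in\mathbb{R}^d: x_k\neq0\ \forall k\}$, and let $\rho:=\sup\{\lambda_{\max}(\nabla^2L(x)) : \|x_k\|_2=1\ \forall k\in[K]\}<\infty$. Then for any $x\in U$ and $v\in\mathbb{R}^d$ with $\langle x_k,v_k\rangle=0$ for all $k\in[K]$, $$L(x+v)-L(x)\le\langle v,\nabla L(x)\rangle+\frac{\rho}{2}\sum_{k=1}^K\frac{\|v_k\|_2^2}{\|x_k\|_2^2}.$$
   Context: Fix positive integers $d_1,\ldots,d_K$ with $d=\sum_k d_k$ and write $x\in\mathbb{R}^d$ as $x=(x_1,\ldots,x_K)$ with $x_k\in\mathbb{R}^{d_k}$ (consecutive blocks); similarly $v=(v_1,\dots,v_K)$. A function $f$ on $U$ is multi-group scale invariant iff $f(c_1x_1,\ldots,c_Kx_K)=f(x_1,\ldots,x_K)$ for all $x\in U$ and all $c_1,\ldots,c_K>0$. *)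

theory Defs
  imports "HOL-Analysis.Analysis"
begin

text \<open>Coordinates of R^d are indexed by a finite linearly ordered type 'n; the
  group map grp :: 'n => 'k (monotone and surjective) splits them into K = CARD('k)
  consecutive nonempty blocks.  The block x_k is represented as the vector that agrees
  with x on the coordinates of group k and is zero elsewhere (an isometric embedding of
  R^(d_k) into R^d, so norms and inner products are preserved).\<close>

definition blk :: "('n::finite \<Rightarrow> 'k) \<Rightarrow> real^'n \<Rightarrow> 'k \<Rightarrow> real^'n" where
  "blk grp x k = (\<chi> i. if grp i = k then x $ i else 0)"

definition gscale :: "('n::finite \<Rightarrow> 'k) \<Rightarrow> ('k \<Rightarrow> real) \<Rightarrow> real^'n \<Rightarrow> real^'n" where
  "gscale grp c x = (\<chi> i. c (grp i) * x $ i)"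

definition blockU :: "('n::finite \<Rightarrow> 'k) \<Rightarrow> (real^'n) set" where
  "blockU grp = {x. \<forall>k. blk grp x k \<noteq> 0}"

definition multi_group_scale_invariant ::
    "('n::finite \<Rightarrow> 'k) \<Rightarrow> (real^'n) set \<Rightarrow> (real^'n \<Rightarrow> 'a) \<Rightarrow> bool" where
  "multi_group_scale_invariant grp U f \<longleftrightarrow>
     (\<forall>x\<in>U. \<forall>c. (\<forall>k. c k > 0) \<longrightarrow> f (gscale grp c x) = f x)"

definition lambda_max :: "real^'n^'n \<Rightarrow> real" where
  "lambda_max A = Max {l. \<exists>v. v \<noteq> 0 \<and> A *v v = l *\<^sub>R v}"

end

theory Submission
  imports Defs "HOL-Computational_Algebra.Polynomial"
begin

lemma det_zero_of_eig:
  fixes M :: "real^'n^'n"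
  assumes "v \<noteq> 0" "M *v v = 0" shows "det M = 0"
proof (rule ccontr)
  assume "det M \<noteq> 0"
  then have "invertible M" by (simp add: invertible_det_nz)
  then obtain B where "B ** M = mat 1" unfolding invertible_def by blast
  then have "v = B *v (M *v v)" by (simp add: matrix_vector_mul_assoc)
  with assms show False by simp
qed

lemma eig_finite:
  fixes A :: "real^'n^'n"
  shows "finite {l. \<exists>v. v \<noteq> 0 \<and> A *v v = l *\<^sub>R v}"
proof -
  define P where "P = (\<Sum>p\<in>{p. p permutes (UNIV::'n set)}. smult (of_int (sign p))
      (\<Prod>i\<in>UNIV. [: A$i$p i, - (if i = p i then 1 else 0) :]))"
  have polyP: "poly P l = det (A - l *\<^sub>R mat 1)" for l
    unfolding P_def det_def poly_sum
    by (intro sum.cong refl) (simp add: poly_prod mat_def algebra_simps)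
  have eig_det: "det (A - l *\<^sub>R mat 1) = 0" if "v \<noteq> 0" "A *v v = l *\<^sub>R v" for l v
    apply (rule det_zero_of_eig[OF that(1)])
    using that(2) by (simp add: algebra_simps scaleR_matrix_vector_assoc[symmetric])
  obtain B where B: "B > 0" "\<And>v. norm (A *v v) \<le> norm v * B"
    using bounded_linear.pos_bounded[OF matrix_vector_mul_bounded_linear] by blast
  have "P \<noteq> 0"
  proof
    assume "P = 0"
    then have "det (A - (B+1) *\<^sub>R mat 1) = 0" using polyP[of "B+1"] by simp
    then have "\<not> inj ((*v) (A - (B+1) *\<^sub>R mat 1))"
      using det_nz_iff_inj[of "(*v) (A - (B+1) *\<^sub>R mat 1)"] by (simp add: matrix_of_matrix_vector_mul)
    then obtain u w where "u \<noteq> w" "(A - (B+1) *\<^sub>R mat 1) *v u = (A - (B+1) *\<^sub>R mat 1) *v w"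
      unfolding inj_def by blast
    then have "(A - (B+1) *\<^sub>R mat 1) *v (u - w) = 0" by (simp add: matrix_vector_mult_diff_distrib)
    then have e: "A *v (u - w) = (B+1) *\<^sub>R (u - w)"
      by (simp add: algebra_simps scaleR_matrix_vector_assoc[symmetric])
    have "norm (A *v (u - w)) = (B+1) * norm (u - w)" unfolding e using B by simp
    moreover have "norm (u - w) > 0" using \<open>u \<noteq> w\<close> by simp
    ultimately show False using B(2)[of "u - w"] by (simp add: algebra_simps)
  qed
  have "{l. \<exists>v. v \<noteq> 0 \<and> A *v v = l *\<^sub>R v} \<subseteq> {l. poly P l = 0}"
    using eig_det polyP by auto
  then show ?thesis using poly_roots_finite[OF \<open>P \<noteq> 0\<close>] finite_subset by blast
qed

lemma quad_scale: fixes A :: "real^'n^'n" shows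
  "(c *\<^sub>R w) \<bullet> (A *v (c *\<^sub>R w)) = c^2 * (w \<bullet> (A *v w))"
  by (simp add: matrix_vector_mult_scaleR power2_eq_square)

lemma rayleigh:
  fixes A :: "real^'n^'n"
  assumes sym: "\<And>u w. (A *v u) \<bullet> w = u \<bullet> (A *v w)"
  shows "w \<bullet> (A *v w) \<le> lambda_max A * (norm w)^2"
proof -
  define q where "q = (\<lambda>u::real^'n. u \<bullet> (A *v u))"
  have cq: "continuous_on (sphere 0 1) q" unfolding q_def
    by (intro continuous_intros linear_continuous_on matrix_vector_mul_bounded_linear)
  have ne: "sphere (0::real^'n) 1 \<noteq> {}" by simp
  obtain u where u: "u \<in> sphere 0 1" and umax: "\<And>w. w \<in> sphere 0 1 \<Longrightarrow> q w \<le> q u"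
    using continuous_attains_sup[OF compact_sphere ne cq] by blast
  define \<mu> where "\<mu> = q u"
  have nu: "norm u = 1" using u by simp
  have qle: "q w \<le> \<mu> * (norm w)^2" for w
  proof (cases "w = 0")
    case True then show ?thesis by (simp add: q_def)
  next
    case False
    define w' where "w' = (1 / norm w) *\<^sub>R w"
    have "w' \<in> sphere 0 1" using False by (simp add: w'_def)
    then have "q w' \<le> \<mu>" using umax \<mu>_def by simp
    moreover have "w = norm w *\<^sub>R w'" using False by (simp add: w'_def)
    then have "q w = (norm w)^2 * q w'" unfolding q_def by (metis quad_scale)
    ultimately show ?thesis by (metis mult.commute mult_right_mono zero_le_power2)
  qed
  define r where "r = A *v u - \<mu> *\<^sub>R u"
  have uu: "u \<bullet> u = 1" using nu by (simp add: dot_square_norm)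
  have ru: "r \<bullet> u = 0" unfolding r_def \<mu>_def q_def
    by (simp add: inner_diff_left inner_diff_right uu inner_commute)
  have rAu: "r \<bullet> (A *v u) = r \<bullet> r"
  proof -
    have "r \<bullet> r = r \<bullet> (A *v u - \<mu> *\<^sub>R u)" by (subst (2) r_def) simp
    also have "\<dots> = r \<bullet> (A *v u)" by (simp add: inner_diff_right ru)
    finally show ?thesis by simp
  qed
  have key: "2 * s * (r \<bullet> r) \<le> s^2 * (\<mu> * (r \<bullet> r) - q r)" for s
  proof -
    have "q (u + s *\<^sub>R r) \<le> \<mu> * (norm (u + s *\<^sub>R r))^2" by (rule qle)
    moreover have "(norm (u + s *\<^sub>R r))^2 = 1 + s^2 * (r \<bullet> r)"
      unfolding power2_norm_eq_inner
      by (simp add: inner_add_left inner_add_right uu ru inner_commute power2_eq_square)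
    moreover have "q (u + s *\<^sub>R r) = \<mu> + 2 * s * (r \<bullet> r) + s^2 * q r"
    proof -
      have "q (u + s *\<^sub>R r) = u \<bullet> (A *v u) + s * (r \<bullet> (A *v u)) + s * (u \<bullet> (A *v r)) + s^2 * q r"
        unfolding q_def by (simp add: matrix_vector_right_distrib matrix_vector_mult_scaleR
            inner_add_left inner_add_right power2_eq_square algebra_simps)
      also have "u \<bullet> (A *v r) = r \<bullet> (A *v u)" using sym[of r u] by (simp add: inner_commute)
      finally show ?thesis using rAu by (simp add: \<mu>_def q_def)
    qed
    ultimately show ?thesis by (simp add: algebra_simps)
  qed
  have "r \<bullet> r = 0"
  proof (rule ccontr)
    assume "r \<bullet> r \<noteq> 0"
    then have pos: "r \<bullet> r > 0" by (simp add: order_less_le)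
    define K where "K = \<bar>\<mu> * (r \<bullet> r) - q r\<bar> + 1"
    have K: "K > 0" by (simp add: K_def)
    define s where "s = (r \<bullet> r) / K"
    have s: "s > 0" using pos K by (simp add: s_def)
    have "2 * s * (r \<bullet> r) \<le> s^2 * K"
      using key[of s] s by (smt (verit) K_def mult_left_mono zero_le_power2 abs_ge_self)
    then have "2 * (r \<bullet> r) \<le> s * K" using s by (simp add: power2_eq_square)
    also have "s * K = r \<bullet> r" using K by (simp add: s_def)
    finally show False using pos by simp
  qed
  then have eig: "A *v u = \<mu> *\<^sub>R u" unfolding r_def by simp
  have "u \<noteq> 0" using nu by auto
  then have "\<mu> \<le> lambda_max A" unfolding lambda_max_def
    using eig by (intro Max_ge[OF eig_finite]) auto
  then have "\<mu> * (norm w)^2 \<le> lambda_max A * (norm w)^2" by (simp add: mult_right_mono)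
  then show ?thesis using qle[of w] by (simp add: q_def)
qed

lemma lambda_max_ge:
  fixes A :: "real^'n^'n"
  assumes sym: "\<And>u w. (A *v u) \<bullet> w = u \<bullet> (A *v w)"
    and "u \<noteq> 0" "u \<bullet> (A *v u) \<ge> 0"
  shows "lambda_max A \<ge> 0"
proof -
  have "0 \<le> lambda_max A * (norm u)^2" using rayleigh[OF sym, of u] assms by linarith
  then show ?thesis using assms(2) by (simp add: zero_le_mult_iff)
qed

lemma line_deriv:
  fixes F :: "'a::real_normed_vector \<Rightarrow> real"
  assumes "(F has_derivative F') (at (p + t *\<^sub>R w))"
  shows "((\<lambda>t. F (p + t *\<^sub>R w)) has_field_derivative (F' w)) (at t)"
proof -
  have lin: "linear F'" using assms has_derivative_linear by blast
  have "((\<lambda>t. p + t *\<^sub>R w) has_derivative (\<lambda>s. s *\<^sub>R w)) (at t)"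
    by (auto intro!: derivative_eq_intros)
  from has_derivative_compose[OF this assms]
  show ?thesis
    by (rule has_derivative_imp_has_field_derivative) (simp add: linear_cmul[OF lin])
qed

lemma schwarz_aux:
  fixes L :: "real^'n \<Rightarrow> real" and G :: "real^'n \<Rightarrow> real^'n" and A :: "real^'n^'n"
  assumes dL: "\<forall>z\<in>ball y r. (L has_derivative (\<lambda>h. G z \<bullet> h)) (at z)"
    and eps: "\<forall>u. norm u < d \<longrightarrow> norm (G (y+u) - G y - A *v u) \<le> e * norm u"
    and s: "s > 0" and sm: "s * (norm h + norm k) < min d r" and e: "e \<ge> 0"
  shows "\<bar>L (y + s *\<^sub>R h + s *\<^sub>R k) - L (y + s *\<^sub>R h) - L (y + s *\<^sub>R k) + L y
           - s^2 * ((A *v k) \<bullet> h)\<bar> \<le> 2 * e * s^2 * (norm h + norm k)^2"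
proof -
  define \<phi> where "\<phi> = (\<lambda>t. L ((y + s *\<^sub>R k) + t *\<^sub>R h) - L (y + t *\<^sub>R h))"
  define \<phi>' where "\<phi>' = (\<lambda>t. G ((y + s *\<^sub>R k) + t *\<^sub>R h) \<bullet> h - G (y + t *\<^sub>R h) \<bullet> h)"
  have nb: "norm (s *\<^sub>R k + t *\<^sub>R h) \<le> s * (norm h + norm k)" "norm (t *\<^sub>R h) \<le> s * (norm h + norm k)"
    if "0 \<le> t" "t \<le> s" for t
  proof -
    have "norm (s *\<^sub>R k + t *\<^sub>R h) \<le> s * norm k + t * norm h"
      using norm_triangle_ineq[of "s *\<^sub>R k" "t *\<^sub>R h"] that s by simp
    also have "\<dots> \<le> s * norm k + s * norm h" using that by (simp add: mult_right_mono)
    finally show "norm (s *\<^sub>R k + t *\<^sub>R h) \<le> s * (norm h + norm k)" by (simp add: algebra_simps)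
    have "norm (t *\<^sub>R h) = t * norm h" using that by simp
    also have "\<dots> \<le> s * (norm h + norm k)" using that s
      by (smt (verit) mult_right_mono norm_ge_zero mult_nonneg_nonneg distrib_left)
    finally show "norm (t *\<^sub>R h) \<le> s * (norm h + norm k)" .
  qed
  have der: "DERIV \<phi> t :> \<phi>' t" if "0 \<le> t" "t \<le> s" for t
  proof -
    have b1: "(y + s *\<^sub>R k) + t *\<^sub>R h \<in> ball y r"
      using nb(1)[OF that] sm by (simp add: dist_norm add.assoc norm_minus_commute[of "- (s *\<^sub>R k)"] add.commute)
    have b2: "y + t *\<^sub>R h \<in> ball y r"
      using nb(2)[OF that] sm by (simp add: dist_norm)
    show ?thesis unfolding \<phi>_def \<phi>'_def
      by (intro derivative_intros line_deriv[where F=L] dL[rule_format] b1 b2)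
  qed
  obtain \<tau> where \<tau>: "0 < \<tau>" "\<tau> < s" and mvt: "\<phi> s - \<phi> 0 = (s - 0) * \<phi>' \<tau>"
    using MVT2[OF s der] by auto
  have \<Delta>: "\<phi> s - \<phi> 0 = L (y + s *\<^sub>R h + s *\<^sub>R k) - L (y + s *\<^sub>R h) - L (y + s *\<^sub>R k) + L y"
    by (simp add: \<phi>_def add_ac)
  define u1 where "u1 = s *\<^sub>R k + \<tau> *\<^sub>R h"
  define u2 where "u2 = \<tau> *\<^sub>R h"
  have n1: "norm u1 \<le> s * (norm h + norm k)" and n2: "norm u2 \<le> s * (norm h + norm k)"
    using nb[of \<tau>] \<tau> by (auto simp: u1_def u2_def)
  have d1: "norm (G (y+u1) - G y - A *v u1) \<le> e * norm u1" using eps n1 sm by auto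
  have d2: "norm (G (y+u2) - G y - A *v u2) \<le> e * norm u2" using eps n2 sm by auto
  have split: "\<phi>' \<tau> - s * ((A *v k) \<bullet> h) = (G (y+u1) - G y - A *v u1) \<bullet> h - (G (y+u2) - G y - A *v u2) \<bullet> h"
    unfolding \<phi>'_def u1_def u2_def
    by (simp add: inner_diff_left inner_add_left matrix_vector_right_distrib matrix_vector_mult_scaleR add_ac)
  have "\<bar>\<phi>' \<tau> - s * ((A *v k) \<bullet> h)\<bar> \<le> norm (G (y+u1) - G y - A *v u1) * norm h + norm (G (y+u2) - G y - A *v u2) * norm h"
    unfolding split by (smt (verit) Cauchy_Schwarz_ineq2)
  also have "\<dots> \<le> e * norm u1 * norm h + e * norm u2 * norm h"
    using d1 d2 by (simp add: add_mono mult_right_mono)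
  also have "\<dots> \<le> e * (s * (norm h + norm k)) * (norm h + norm k) + e * (s * (norm h + norm k)) * (norm h + norm k)"
    using n1 n2 e s by (intro add_mono mult_mono mult_left_mono) auto
  finally have bd: "\<bar>\<phi>' \<tau> - s * ((A *v k) \<bullet> h)\<bar> \<le> 2 * e * s * (norm h + norm k)^2"
    by (simp add: power2_eq_square algebra_simps)
  have "L (y + s *\<^sub>R h + s *\<^sub>R k) - L (y + s *\<^sub>R h) - L (y + s *\<^sub>R k) + L y - s^2 * ((A *v k) \<bullet> h)
       = s * (\<phi>' \<tau> - s * ((A *v k) \<bullet> h))"
    using mvt \<Delta> by (simp add: power2_eq_square algebra_simps)
  then have "\<bar>L (y + s *\<^sub>R h + s *\<^sub>R k) - L (y + s *\<^sub>R h) - L (y + s *\<^sub>R k) + L y - s^2 * ((A *v k) \<bullet> h)\<bar>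
       = s * \<bar>\<phi>' \<tau> - s * ((A *v k) \<bullet> h)\<bar>" using s by (simp add: abs_mult)
  also have "\<dots> \<le> s * (2 * e * s * (norm h + norm k)^2)" using bd s by (simp add: mult_left_mono)
  finally show ?thesis by (simp add: power2_eq_square algebra_simps)
qed


lemma hess_sym:
  fixes L :: "real^'n \<Rightarrow> real" and G :: "real^'n \<Rightarrow> real^'n" and A :: "real^'n^'n"
  assumes U: "open U" "y \<in> U"
    and dL: "\<forall>z\<in>U. (L has_derivative (\<lambda>h. G z \<bullet> h)) (at z)"
    and dG: "(G has_derivative (\<lambda>h. A *v h)) (at y)"
  shows "(A *v h) \<bullet> k = h \<bullet> (A *v k)"
proof -
  define a where "a = (A *v k) \<bullet> h"
  define b where "b = (A *v h) \<bullet> k"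
  define M where "M = (norm h + norm k)^2"
  obtain r where r: "r > 0" "ball y r \<subseteq> U" using U open_contains_ball by blast
  have dL': "\<forall>z\<in>ball y r. (L has_derivative (\<lambda>h. G z \<bullet> h)) (at z)" using dL r by auto
  have bound: "\<bar>a - b\<bar> \<le> 4 * e * M" if e: "e > 0" for e
  proof -
    obtain d where d: "d > 0" and dd: "\<forall>z. norm (z - y) < d \<longrightarrow> norm (G z - G y - A *v (z - y)) \<le> e * norm (z - y)"
      using dG e unfolding has_derivative_at_alt by blast
    have eps: "\<forall>u. norm u < d \<longrightarrow> norm (G (y+u) - G y - A *v u) \<le> e * norm u"
      using dd by (metis add_diff_cancel_left')
    define N where "N = norm h + norm k"
    have N: "N \<ge> 0" by (simp add: N_def)
    define s where "s = min d r / (2 * (N + 1))"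
    have s: "s > 0" using d r N by (simp add: s_def)
    have "s * N = min d r * (N / (2 * (N + 1)))" by (simp add: s_def)
    also have "\<dots> < min d r * 1"
      using d r N by (intro mult_strict_left_mono) (auto simp: field_simps)
    finally have sm: "s * (norm h + norm k) < min d r" "s * (norm k + norm h) < min d r"
      by (simp_all add: N_def add.commute)
    have 1: "\<bar>L (y + s *\<^sub>R h + s *\<^sub>R k) - L (y + s *\<^sub>R h) - L (y + s *\<^sub>R k) + L y - s^2 * a\<bar> \<le> 2 * e * s^2 * M"
      using schwarz_aux[OF dL' eps s sm(1)] e unfolding a_def M_def by simp
    have 2: "\<bar>L (y + s *\<^sub>R k + s *\<^sub>R h) - L (y + s *\<^sub>R k) - L (y + s *\<^sub>R h) + L y - s^2 * b\<bar> \<le> 2 * e * s^2 * M"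
      using schwarz_aux[OF dL' eps s sm(2)] e unfolding b_def M_def by (simp add: add.commute)
    have eq: "y + s *\<^sub>R k + s *\<^sub>R h = y + s *\<^sub>R h + s *\<^sub>R k" by (simp add: add_ac)
    have 3: "s^2 * \<bar>a - b\<bar> = \<bar>s^2 * a - s^2 * b\<bar>" by (simp add: abs_mult right_diff_distrib[symmetric])
    have "s^2 * \<bar>a - b\<bar> \<le> s^2 * (4 * e * M)" using 1 2 unfolding eq 3 by (simp add: abs_le_iff) (simp add: algebra_simps abs_le_iff; linarith)
    then show ?thesis using s by simp
  qed
  have "a = b"
  proof (rule ccontr)
    assume "a \<noteq> b"
    then have p: "\<bar>a - b\<bar> > 0" by simp
    have M: "M \<ge> 0" by (simp add: M_def)
    define e where "e = \<bar>a - b\<bar> / (8 * (M + 1))"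
    have "e > 0" using p M by (simp add: e_def)
    then have "\<bar>a - b\<bar> \<le> 4 * e * M" by (rule bound)
    also have "4 * e * M = \<bar>a - b\<bar> * (M / (2 * (M + 1)))" using M by (simp add: e_def field_simps)
    also have "\<dots> < \<bar>a - b\<bar> * 1" using p M by (intro mult_strict_left_mono) (auto simp: field_simps)
    finally show False by simp
  qed
  then show ?thesis by (simp add: a_def b_def inner_commute)
qed


lemma blk_add: "blk grp (x + y) k = blk grp x k + blk grp y k"
  by (simp add: blk_def vec_eq_iff)
lemma blk_scaleR: "blk grp (t *\<^sub>R x) k = t *\<^sub>R blk grp x k"
  by (simp add: blk_def vec_eq_iff)
lemma blk_gscale: "blk grp (gscale grp c w) k = c k *\<^sub>R blk grp w k"
  by (simp add: blk_def gscale_def vec_eq_iff)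
lemma gscale_gscale: "gscale grp c (gscale grp c' w) = gscale grp (\<lambda>k. c k * c' k) w"
  by (simp add: gscale_def vec_eq_iff)
lemma gscale_one: "(\<forall>k. c k = 1) \<Longrightarrow> gscale grp c w = w"
  by (simp add: gscale_def vec_eq_iff)
lemma gscale_adj: "gscale grp c u \<bullet> w = u \<bullet> gscale grp c w"
  by (simp add: gscale_def inner_vec_def algebra_simps)
lemma linear_gscale: "linear (gscale grp c)"
  by (rule linearI) (simp_all add: gscale_def vec_eq_iff algebra_simps)
lemma linear_blk: "linear (\<lambda>x. blk grp x k)"
  by (rule linearI) (simp_all add: blk_add blk_scaleR)

lemma inner_blk: fixes grp :: "'n::finite \<Rightarrow> 'k::finite" shows "(u::real^'n) \<bullet> w = (\<Sum>k\<in>UNIV. blk grp u k \<bullet> blk grp w k)"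
proof -
  have "(\<Sum>k\<in>UNIV. blk grp u k \<bullet> blk grp w k) = (\<Sum>k\<in>(UNIV::'k set). \<Sum>i\<in>UNIV. if grp i = k then u$i * w$i else 0)"
    by (simp add: blk_def inner_vec_def if_distrib cong: if_cong)
  also have "\<dots> = (\<Sum>i\<in>UNIV. \<Sum>k\<in>(UNIV::'k set). if grp i = k then u$i * w$i else 0)"
    by (rule sum.swap)
  also have "\<dots> = u \<bullet> w" by (simp add: inner_vec_def)
  finally show ?thesis by simp
qed

lemma norm2_blk: fixes grp :: "'n::finite \<Rightarrow> 'k::finite" shows "(norm (w::real^'n::finite))^2 = (\<Sum>k\<in>UNIV. (norm (blk grp w k))^2)"
  by (simp add: power2_norm_eq_inner inner_blk[of w w grp])

lemma open_blockU: fixes grp :: "'n::finite \<Rightarrow> 'k::finite" shows "open (blockU grp)"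
proof -
  have "blockU grp = (\<Inter>k. (\<lambda>x. blk grp x k) -` (- {0}))"
    by (auto simp: blockU_def)
  moreover have "open ((\<lambda>x. blk grp x k) -` (- {0}))" for k
    by (rule open_vimage) (auto intro: linear_continuous_on linear_conv_bounded_linear[THEN iffD1] linear_blk)
  ultimately show ?thesis by (auto intro!: open_INT)
qed

lemma gscale_blockU: "(\<forall>k. c k > 0) \<Longrightarrow> y \<in> blockU grp \<Longrightarrow> gscale grp c y \<in> blockU grp"
  by (auto simp: blockU_def blk_gscale) (metis less_irrefl)


lemma bl_gscale: "bounded_linear (gscale grp c)"
  using linear_gscale linear_conv_bounded_linear by blast

lemma scale_G:
  fixes grp :: "'n::finite \<Rightarrow> 'k::finite" and L :: "real^'n \<Rightarrow> real"
  assumes inv: "multi_group_scale_invariant grp (blockU grp) L"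
    and grad: "\<forall>y\<in>blockU grp. (L has_derivative (\<lambda>h. G y \<bullet> h)) (at y)"
    and c: "\<forall>k. c k > 0" and y: "y \<in> blockU grp"
  shows "gscale grp c (G (gscale grp c y)) = G y"
proof -
  have d1: "((\<lambda>z. L (gscale grp c z)) has_derivative (\<lambda>h. G (gscale grp c y) \<bullet> gscale grp c h)) (at y)"
    using has_derivative_compose[OF bounded_linear_imp_has_derivative[OF bl_gscale]
        grad[rule_format, OF gscale_blockU[OF c y]]] .
  have d2: "((\<lambda>z. L (gscale grp c z)) has_derivative (\<lambda>h. G y \<bullet> h)) (at y)"
    by (rule has_derivative_transform_within_open[OF grad[rule_format, OF y] open_blockU y])
       (use inv c in \<open>auto simp: multi_group_scale_invariant_def\<close>)
  have eq: "G (gscale grp c y) \<bullet> gscale grp c h = G y \<bullet> h" for h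
    using has_derivative_unique[OF d1 d2] by (metis)
  define r where "r = gscale grp c (G (gscale grp c y)) - G y"
  have "r \<bullet> r = 0" using eq[of r]
    by (simp add: r_def inner_diff_left gscale_adj)
  then show ?thesis by (simp add: r_def)
qed

lemma scale_H:
  fixes grp :: "'n::finite \<Rightarrow> 'k::finite" and L :: "real^'n \<Rightarrow> real"
  assumes inv: "multi_group_scale_invariant grp (blockU grp) L"
    and grad: "\<forall>y\<in>blockU grp. (L has_derivative (\<lambda>h. G y \<bullet> h)) (at y)"
    and hess: "\<forall>y\<in>blockU grp. (G has_derivative (\<lambda>h. H y *v h)) (at y)"
    and c: "\<forall>k. c k > 0" and y: "y \<in> blockU grp"
  shows "gscale grp c (H (gscale grp c y) *v gscale grp c h) = H y *v h"
proof -
  have d0: "((\<lambda>z. G (gscale grp c z)) has_derivative (\<lambda>h. H (gscale grp c y) *v gscale grp c h)) (at y)"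
    using has_derivative_compose[OF bounded_linear_imp_has_derivative[OF bl_gscale]
        hess[rule_format, OF gscale_blockU[OF c y]]] .
  have d1: "((\<lambda>z. gscale grp c (G (gscale grp c z))) has_derivative (\<lambda>h. gscale grp c (H (gscale grp c y) *v gscale grp c h))) (at y)"
    using has_derivative_compose[OF d0 bounded_linear_imp_has_derivative[OF bl_gscale]] .
  have d2: "((\<lambda>z. gscale grp c (G (gscale grp c z))) has_derivative (\<lambda>h. H y *v h)) (at y)"
    by (rule has_derivative_transform_within_open[OF hess[rule_format, OF y] open_blockU y])
       (use scale_G[OF inv grad c] in auto)
  show ?thesis using has_derivative_unique[OF d1 d2] by metis
qed

lemma scale_quad:
  fixes grp :: "'n::finite \<Rightarrow> 'k::finite" and L :: "real^'n \<Rightarrow> real"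
  assumes inv: "multi_group_scale_invariant grp (blockU grp) L"
    and grad: "\<forall>y\<in>blockU grp. (L has_derivative (\<lambda>h. G y \<bullet> h)) (at y)"
    and hess: "\<forall>y\<in>blockU grp. (G has_derivative (\<lambda>h. H y *v h)) (at y)"
    and c: "\<forall>k. c k > 0" and y: "y \<in> blockU grp"
  shows "gscale grp c w \<bullet> (H (gscale grp c y) *v gscale grp c w) = w \<bullet> (H y *v w)"
  by (simp add: gscale_adj scale_H[OF inv grad hess c y])


lemma blk_quad_zero:
  fixes grp :: "'n::finite \<Rightarrow> 'k::finite" and L :: "real^'n \<Rightarrow> real"
  assumes inv: "multi_group_scale_invariant grp (blockU grp) L"
    and grad: "\<forall>y\<in>blockU grp. (L has_derivative (\<lambda>h. G y \<bullet> h)) (at y)"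
    and hess: "\<forall>y\<in>blockU grp. (G has_derivative (\<lambda>h. H y *v h)) (at y)"
    and z: "z \<in> blockU grp"
  shows "blk grp z k \<bullet> (H z *v blk grp z k) = 0"
proof -
  define b where "b = blk grp z k"
  have path: "z + s *\<^sub>R b = gscale grp (\<lambda>j. if j = k then 1 + s else 1) z" for s
    by (simp add: b_def blk_def gscale_def vec_eq_iff algebra_simps)
  have inU: "z + s *\<^sub>R b \<in> blockU grp" if "s > -1" for s
    unfolding path using that by (intro gscale_blockU z) auto
  have fconst: "L (z + s *\<^sub>R b) = L z" if "s > -1" for s
    unfolding path using inv z that by (auto simp: multi_group_scale_invariant_def)
  define g where "g = (\<lambda>s. G (z + s *\<^sub>R b) \<bullet> b)"
  have g0: "g s = 0" if s: "s > -1" for s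
  proof -
    have d1: "DERIV (\<lambda>s. L (z + s *\<^sub>R b)) s :> g s"
      unfolding g_def by (rule line_deriv[where F=L]) (use grad inU[OF s] in auto)
    have d3: "\<forall>y. \<bar>s - y\<bar> < s + 1 \<longrightarrow> L (z + s *\<^sub>R b) = L (z + y *\<^sub>R b)"
      using fconst s by auto
    have d2: "(0::real) < s + 1" using s by simp
    show ?thesis by (rule DERIV_local_const[OF d1 d2 d3])
  qed
  have e1: "DERIV g 0 :> (H z *v b) \<bullet> b"
    unfolding g_def
    by (rule line_deriv[where F="\<lambda>y. G y \<bullet> b"])
       (use hess z in \<open>auto intro!: derivative_eq_intros\<close>)
  have e3: "\<forall>y. \<bar>0 - y\<bar> < 1 \<longrightarrow> g 0 = g y" using g0 by auto
  have "(H z *v b) \<bullet> b = 0" by (rule DERIV_local_const[OF e1 zero_less_one e3])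
  then show ?thesis by (simp add: b_def inner_commute)
qed

lemma lmax_nonneg:
  fixes grp :: "'n::finite \<Rightarrow> 'k::finite" and L :: "real^'n \<Rightarrow> real"
  assumes inv: "multi_group_scale_invariant grp (blockU grp) L"
    and grad: "\<forall>y\<in>blockU grp. (L has_derivative (\<lambda>h. G y \<bullet> h)) (at y)"
    and hess: "\<forall>y\<in>blockU grp. (G has_derivative (\<lambda>h. H y *v h)) (at y)"
    and z: "z \<in> blockU grp"
  shows "lambda_max (H z) \<ge> 0"
proof (rule lambda_max_ge)
  show "(H z *v u) \<bullet> w = u \<bullet> (H z *v w)" for u w
    using hess_sym[OF open_blockU z grad] hess z by blast
  show "blk grp z undefined \<noteq> 0" using z by (simp add: blockU_def)
  show "0 \<le> blk grp z undefined \<bullet> (H z *v blk grp z undefined)"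
    using blk_quad_zero[OF inv grad hess z] by simp
qed


theorem mainTheorem5:
  fixes grp :: "'n::{finite,linorder} \<Rightarrow> 'k::{finite,linorder}"
    and L :: "real^('n::{finite,linorder}) \<Rightarrow> real"
    and G :: "real^('n::{finite,linorder}) \<Rightarrow> real^('n::{finite,linorder})"
    and H :: "real^('n::{finite,linorder}) \<Rightarrow> real^('n::{finite,linorder})^('n::{finite,linorder})"
    and x v :: "real^('n::{finite,linorder})"
  assumes grp_mono: "mono grp"
    and grp_surj: "surj grp"
    and inv: "multi_group_scale_invariant grp (blockU grp) L"
    and grad: "\<forall>y\<in>blockU grp. (L has_derivative (\<lambda>h. G y \<bullet> h)) (at y)"
    and hess: "\<forall>y\<in>blockU grp. (G has_derivative (\<lambda>h. H y *v h)) (at y)"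
    and bdd: "bdd_above {lambda_max (H y) | y. \<forall>k. norm (blk grp y k) = 1}"
    and xU: "x \<in> blockU grp"
    and orth: "\<forall>k. blk grp x k \<bullet> blk grp v k = 0"
  shows "L (x + v) - L x \<le> v \<bullet> G x
     + (Sup {lambda_max (H y) | y. \<forall>k. norm (blk grp y k) = 1}) / 2
       * (\<Sum>k\<in>UNIV. (norm (blk grp v k))^2 / (norm (blk grp x k))^2)"
proof -
  define Z where "Z = {lambda_max (H y) | y. \<forall>k. norm (blk grp y k) = 1}"
  define \<rho> where "\<rho> = Sup Z"
  define S where "S = (\<Sum>k\<in>UNIV. (norm (blk grp v k))^2 / (norm (blk grp x k))^2)"
  have xk: "norm (blk grp x k) > 0" for k using xU by (simp add: blockU_def)
  have nrm: "(norm (blk grp (x + t *\<^sub>R v) k))^2 = (norm (blk grp x k))^2 + t^2 * (norm (blk grp v k))^2" for t k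
  proof -
    have "orthogonal (blk grp x k) (t *\<^sub>R blk grp v k)" using orth by (simp add: orthogonal_def)
    from norm_add_Pythagorean[OF this] show ?thesis by (simp add: blk_add blk_scaleR power_mult_distrib)
  qed
  have yk: "norm (blk grp (x + t *\<^sub>R v) k) > 0" for t k
  proof -
    have "(norm (blk grp (x + t *\<^sub>R v) k))^2 > 0" unfolding nrm using xk[of k]
      by (simp add: add_pos_nonneg)
    then show ?thesis by simp
  qed
  have yU: "x + t *\<^sub>R v \<in> blockU grp" for t
    using yk[of t] by (auto simp: blockU_def)
  have quad: "v \<bullet> (H (x + t *\<^sub>R v) *v v) \<le> \<rho> * S" for t
  proof -
    define y where "y = x + t *\<^sub>R v"
    define c where "c = (\<lambda>k. norm (blk grp y k))"
    define ci where "ci = (\<lambda>k. 1 / c k)"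
    have c: "\<forall>k. c k > 0" using yk by (simp add: c_def y_def)
    have ci: "\<forall>k. ci k > 0" using c by (simp add: ci_def)
    define z where "z = gscale grp ci y"
    have zU: "z \<in> blockU grp" unfolding z_def y_def by (rule gscale_blockU[OF ci yU])
    have zunit: "\<forall>k. norm (blk grp z k) = 1"
      using c by (simp add: z_def blk_gscale ci_def c_def)
    have yz: "gscale grp c z = y" unfolding z_def gscale_gscale
      using c by (intro gscale_one) (simp add: ci_def order_less_imp_not_eq2)
    define w where "w = gscale grp ci v"
    have vw: "gscale grp c w = v" unfolding w_def gscale_gscale
      using c by (intro gscale_one) (simp add: ci_def order_less_imp_not_eq2)
    have sym: "(H z *v a) \<bullet> b = a \<bullet> (H z *v b)" for a b
      using hess_sym[OF open_blockU zU grad] hess zU by blast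
    have "v \<bullet> (H y *v v) = w \<bullet> (H z *v w)"
      using scale_quad[OF inv grad hess c zU, of w] by (simp add: yz vw)
    also have "\<dots> \<le> lambda_max (H z) * (norm w)^2" by (rule rayleigh[OF sym])
    also have "\<dots> \<le> \<rho> * (norm w)^2"
    proof (rule mult_right_mono)
      show "lambda_max (H z) \<le> \<rho>" unfolding \<rho>_def
        by (rule cSup_upper) (use zunit bdd in \<open>auto simp: Z_def\<close>)
    qed simp
    also have "\<dots> \<le> \<rho> * S"
    proof (rule mult_left_mono)
      have "0 \<le> lambda_max (H z)" by (rule lmax_nonneg[OF inv grad hess zU])
      also have "lambda_max (H z) \<le> \<rho>" unfolding \<rho>_def
        by (rule cSup_upper) (use zunit bdd in \<open>auto simp: Z_def\<close>)
      finally show "0 \<le> \<rho>" .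
      have "(norm w)^2 = (\<Sum>k\<in>UNIV. (norm (blk grp w k))^2)" by (rule norm2_blk)
      also have "\<dots> = (\<Sum>k\<in>UNIV. (norm (blk grp v k))^2 / (c k)^2)"
        by (simp add: w_def blk_gscale ci_def power_divide abs_of_pos c power2_eq_square)
      also have "\<dots> \<le> S" unfolding S_def
      proof (rule sum_mono)
        fix k
        have "(norm (blk grp x k))^2 \<le> (c k)^2"
          using nrm[of t k] by (simp add: c_def y_def)
        moreover have p: "(norm (blk grp x k))^2 > 0" using xk[of k] by simp
        moreover have "0 < (c k)^2 * (norm (blk grp x k))^2"
          using p calculation(1) by (intro mult_pos_pos) auto
        ultimately show "(norm (blk grp v k))^2 / (c k)^2 \<le> (norm (blk grp v k))^2 / (norm (blk grp x k))^2"
          by (intro divide_left_mono) auto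
      qed
      finally show "(norm w)^2 \<le> S" .
    qed
    finally show ?thesis by (simp add: y_def)
  qed
  define \<psi> where "\<psi> = (\<lambda>t. G (x + t *\<^sub>R v) \<bullet> v - v \<bullet> G x - \<rho> * t * S)"
  define \<phi> where "\<phi> = (\<lambda>t. L (x + t *\<^sub>R v) - t * (v \<bullet> G x) - \<rho> / 2 * t^2 * S)"
  have dpsi: "DERIV \<psi> t :> (H (x + t *\<^sub>R v) *v v) \<bullet> v - \<rho> * S" for t
  proof -
    have d1: "DERIV (\<lambda>t. G (x + t *\<^sub>R v) \<bullet> v) t :> (H (x + t *\<^sub>R v) *v v) \<bullet> v"
      by (rule line_deriv[where F="\<lambda>y. G y \<bullet> v"])
         (use hess yU in \<open>auto intro!: derivative_eq_intros\<close>)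
    have d2: "DERIV (\<lambda>t. \<rho> * t * S) t :> \<rho> * S"
      by (auto intro!: derivative_eq_intros)
    show ?thesis unfolding \<psi>_def using DERIV_diff[OF DERIV_diff[OF d1 DERIV_const] d2] by simp
  qed
  have psi_le: "\<psi> t \<le> 0" if "0 \<le> t" for t
  proof -
    have "\<psi> t \<le> \<psi> 0"
    proof (rule DERIV_nonpos_imp_nonincreasing[OF that])
      fix s show "\<exists>y. DERIV \<psi> s :> y \<and> y \<le> 0"
        using dpsi[of s] quad[of s] by (intro exI[of _ "(H (x + s *\<^sub>R v) *v v) \<bullet> v - \<rho> * S"])
           (simp add: inner_commute)
    qed
    then show ?thesis by (simp add: \<psi>_def inner_commute)
  qed
  have dphi: "DERIV \<phi> t :> \<psi> t" for t
  proof -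
    have d1: "DERIV (\<lambda>t. L (x + t *\<^sub>R v)) t :> G (x + t *\<^sub>R v) \<bullet> v"
      by (rule line_deriv[where F=L]) (use grad yU in auto)
    have d2: "DERIV (\<lambda>t. t * (v \<bullet> G x)) t :> v \<bullet> G x"
      by (auto intro!: derivative_eq_intros)
    have d3: "DERIV (\<lambda>t. \<rho> / 2 * t^2 * S) t :> \<rho> * t * S"
      by (auto intro!: derivative_eq_intros)
    show ?thesis unfolding \<phi>_def \<psi>_def using DERIV_diff[OF DERIV_diff[OF d1 d2] d3] by simp
  qed
  have "\<phi> 1 \<le> \<phi> 0"
  proof (rule DERIV_nonpos_imp_nonincreasing[of 0 1])
    fix s :: real assume "0 \<le> s" "s \<le> 1"
    then show "\<exists>y. DERIV \<phi> s :> y \<and> y \<le> 0" using dphi psi_le by blast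
  qed simp
  then show ?thesis unfolding \<phi>_def \<rho>_def Z_def S_def by simp
qed

end
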